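(* Let $(G,u)$ be a simple dimension group with order unit $u$. Then $\mathbb Q(G,u)=\mathbb Z u$ if and only if there is no $x\in G$ and integer $n$ with $|n|\ge2$ such that $nx=u$.
   Context: A dimension group is an unperforated partially ordered abelian group with the Riesz interpolation property; simple means no nontrivial order ideals. The rational subgroup is $\mathbb Q(G,u)=\{g\in G: pg=mu\text{ for some nonzero } p\in\mathbb Z,\ m\in\mathbb Z\}$. *)

theory Defs
  imports Main
begin

text \<open>The ambient partially ordered abelian group G is the whole type 'a of class
ordered_ab_group_add (an abelian group with a partial order compatible with addition).\<close>

definition nmult :: "nat \<Rightarrow> 'a::ab_group_add \<Rightarrow> 'a" where
  "nmult n x = (\<Sum>i<n. x)"

definition zmult :: "int \<Rightarrow> 'a::ab_group_add \<Rightarrow> 'a" where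
  "zmult n x = (if 0 \<le> n then nmult (nat n) x else - nmult (nat (- n)) x)"

definition unperforated :: "'a::ordered_ab_group_add itself \<Rightarrow> bool" where
  "unperforated _ \<longleftrightarrow> (\<forall>(n::nat) (x::'a). 0 < n \<longrightarrow> 0 \<le> nmult n x \<longrightarrow> 0 \<le> x)"

definition riesz_interpolation :: "'a::ordered_ab_group_add itself \<Rightarrow> bool" where
  "riesz_interpolation _ \<longleftrightarrow>
     (\<forall>(a1::'a) a2 b1 b2. a1 \<le> b1 \<and> a1 \<le> b2 \<and> a2 \<le> b1 \<and> a2 \<le> b2 \<longrightarrow>
        (\<exists>c. a1 \<le> c \<and> a2 \<le> c \<and> c \<le> b1 \<and> c \<le> b2))"

definition dimension_group :: "'a::ordered_ab_group_add itself \<Rightarrow> bool" where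
  "dimension_group T \<longleftrightarrow> unperforated T \<and> riesz_interpolation T"

definition order_ideal :: "'a::ordered_ab_group_add set \<Rightarrow> bool" where
  "order_ideal I \<longleftrightarrow>
     0 \<in> I \<and> (\<forall>x\<in>I. \<forall>y\<in>I. x + y \<in> I) \<and> (\<forall>x\<in>I. - x \<in> I) \<and>
     (\<forall>a b. 0 \<le> a \<and> a \<le> b \<and> b \<in> I \<longrightarrow> a \<in> I) \<and>
     (\<forall>x\<in>I. \<exists>a\<in>I. \<exists>b\<in>I. 0 \<le> a \<and> 0 \<le> b \<and> x = a - b)"

definition simple_pog :: "'a::ordered_ab_group_add itself \<Rightarrow> bool" where
  "simple_pog _ \<longleftrightarrow> (UNIV::'a set) \<noteq> {0} \<and>
     (\<forall>I::'a set. order_ideal I \<longrightarrow> I = {0} \<or> I = UNIV)"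

definition order_unit :: "'a::ordered_ab_group_add \<Rightarrow> bool" where
  "order_unit u \<longleftrightarrow> 0 \<le> u \<and> (\<forall>g. \<exists>n::nat. g \<le> nmult n u)"

definition rational_subgroup :: "'a::ordered_ab_group_add \<Rightarrow> 'a set" where
  "rational_subgroup u = {g. \<exists>p m::int. p \<noteq> 0 \<and> zmult p g = zmult m u}"

end

theory Submission
  imports Defs
begin

lemma nm0[simp]: "nmult 0 x = 0" by (simp add: nmult_def)
lemma nmSuc: "nmult (Suc n) x = nmult n x + x" by (simp add: nmult_def)

lemma zm0[simp]: "zmult 0 x = 0" by (simp add: zmult_def)

lemma zm_step: "zmult (k+1) x = zmult k x + x"
proof (cases "0 \<le> k")
  case True
  then have "nat (k+1) = Suc (nat k)" by simp
  then show ?thesis using True by (simp add: zmult_def nmSuc)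
next
  case False
  show ?thesis
  proof (cases "k = -1")
    case True then show ?thesis by (simp add: zmult_def nmSuc)
  next
    case False2: False
    have "nat (-k) = Suc (nat (-(k+1)))" using False False2 by simp
    then show ?thesis using False False2 by (simp add: zmult_def nmSuc)
  qed
qed

lemma zm_stepm: "zmult (k-1) x = zmult k x - x"
  using zm_step[of "k-1" x] by (simp add: algebra_simps)

lemma zm_add: "zmult (a+b) x = zmult a x + zmult b x"
proof (induction b rule: int_induct[where k=0])
  case base then show ?case by simp
next
  case (step1 i) then show ?case using zm_step[of "a+i" x] zm_step[of i x] by (simp add: algebra_simps)
next
  case (step2 i)
  have "zmult (a + (i - 1)) x = zmult ((a+i) - 1) x" by (simp add: algebra_simps)
  also have "\<dots> = zmult (a+i) x - x" by (rule zm_stepm)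
  finally have L: "zmult (a + (i - 1)) x = zmult (a+i) x - x" .
  have R: "zmult (i-1) x = zmult i x - x" by (rule zm_stepm)
  show ?case unfolding L R using step2 by (metis add_diff_eq)
qed

lemma zm_0r[simp]: "zmult a (0::'a::ab_group_add) = 0"
proof (induction a rule: int_induct[where k=0])
  case base then show ?case by simp
next
  case (step1 i) then show ?case by (simp only: zm_step) simp
next
  case (step2 i)
  have "zmult (i - 1) (0::'a) = zmult i 0 - 0" by (rule zm_stepm)
  then show ?case using step2 by simp
qed

lemma zm_addr: "zmult a (y+z) = zmult a y + zmult a z"
proof (induction a rule: int_induct[where k=0])
  case base then show ?case by simp
next
  case (step1 i) then show ?case using zm_step[of i "y+z"] zm_step[of i y] zm_step[of i z] by (simp add: algebra_simps)
next
  case (step2 i) then show ?case by (simp only: zm_stepm) (simp add: algebra_simps)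
qed

lemma zm_neg: "zmult a (-y) = - zmult a y"
  using zm_addr[of a y "-y"] by (simp add: eq_neg_iff_add_eq_0 add.commute)

lemma zm_diff: "zmult a (y - z) = zmult a y - zmult a z"
  using zm_addr[of a y "-z"] zm_neg[of a z] by simp

lemma zm_1[simp]: "zmult 1 x = x" using zm_step[of 0 x] by simp

lemma zm_m1[simp]: "zmult (-1) x = - x"
  using zm_add[of 1 "-1" x] by (simp add: eq_neg_iff_add_eq_0 add.commute)

lemma zm_mult: "zmult (a*b) x = zmult a (zmult b x)"
proof (induction a rule: int_induct[where k=0])
  case base then show ?case by simp
next
  case (step1 i) then show ?case using zm_step[of i "zmult b x"] zm_add[of "i*b" b x] by (simp add: algebra_simps)
next
  case (step2 i)
  have "zmult ((i - 1)*b) x = zmult (i*b + (-b)) x" by (simp add: algebra_simps)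
  also have "\<dots> = zmult (i*b) x + zmult (-b) x" by (rule zm_add)
  finally have A: "zmult ((i - 1)*b) x = zmult (i*b) x + zmult (-b) x" .
  have B: "zmult (-b) x = - zmult b x" using zm_add[of b "-b" x] by (simp add: eq_neg_iff_add_eq_0 add.commute)
  show ?case using A B step2 by (simp only: zm_stepm) (simp add: algebra_simps)
qed

lemma torsion_free:
  fixes y :: "'a::ordered_ab_group_add"
  assumes "unperforated TYPE('a)" "d \<noteq> 0" "zmult d y = 0"
  shows "y = 0"
proof -
  have pos: "zmult e y = 0 \<Longrightarrow> e > 0 \<Longrightarrow> y = 0" for e
  proof -
    assume h: "zmult e y = 0" "e > 0"
    then have n: "nmult (nat e) y = 0" by (simp add: zmult_def)
    have "nmult (nat e) (-y) = 0" using zm_neg[of e y] h by (simp add: zmult_def)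
    have ne: "0 < nat e" using h(2) by simp
    have "0 \<le> y" using assms(1) ne n unfolding unperforated_def by (metis order_refl)
    moreover have "0 \<le> -y" using assms(1) ne \<open>nmult (nat e) (-y) = 0\<close> unfolding unperforated_def by (metis order_refl)
    ultimately have "0 \<le> y" "0 \<le> -y" by auto
    then show "y = 0" by (simp add: order_antisym)
  qed
  show ?thesis
  proof (cases "d > 0")
    case True then show ?thesis using pos assms by blast
  next
    case False
    have "zmult (-d) y = 0" using zm_mult[of "-1" d y] assms(3) zm_neg[of "-1" 0]
      by simp
    then show ?thesis using pos False assms(2) by (metis neg_0_less_iff_less linorder_neqE_linordered_idom)
  qed
qed

theorem mainTheorem17:
  fixes u :: "'a::ordered_ab_group_add"
  assumes "dimension_group TYPE('a)"
    and "simple_pog TYPE('a)"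
    and "order_unit u"
  shows "rational_subgroup u = range (\<lambda>k::int. zmult k u) \<longleftrightarrow>
         \<not> (\<exists>(x::'a) (n::int). \<bar>n\<bar> \<ge> 2 \<and> zmult n x = u)"
proof -
  have unp: "unperforated TYPE('a)" using assms(1) by (simp add: dimension_group_def)
  have u0: "u \<noteq> 0"
  proof
    assume "u = 0"
    then have "\<forall>g::'a. g \<le> 0" using assms(3) by (simp add: order_unit_def nmult_def)
    then have "\<forall>g::'a. g = 0" by (metis neg_le_0_iff_le order_antisym)
    then show False using assms(2) by (auto simp: simple_pog_def)
  qed
  have sub: "range (\<lambda>k::int. zmult k u) \<subseteq> rational_subgroup u"
  proof
    fix g assume "g \<in> range (\<lambda>k::int. zmult k u)"
    then obtain k where "g = zmult k u" by blast
    then have "zmult (1::int) g = zmult k u" by simp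
    then show "g \<in> rational_subgroup u" unfolding rational_subgroup_def mem_Collect_eq
      by (intro exI[of _ "1::int"] exI[of _ k]) simp
  qed
  show ?thesis
  proof
    assume eq: "rational_subgroup u = range (\<lambda>k::int. zmult k u)"
    show "\<not> (\<exists>(x::'a) (n::int). \<bar>n\<bar> \<ge> 2 \<and> zmult n x = u)"
    proof
      assume "\<exists>(x::'a) (n::int). \<bar>n\<bar> \<ge> 2 \<and> zmult n x = u"
      then obtain x n where n: "\<bar>n\<bar> \<ge> 2" "zmult n x = u" by blast
      have "x \<in> rational_subgroup u"
      proof -
        have "n \<noteq> 0" using n(1) by auto
        moreover have "zmult n x = zmult (1::int) u" using n(2) by simp
        ultimately show ?thesis unfolding rational_subgroup_def mem_Collect_eq by blast
      qed
      with eq obtain k where k: "x = zmult k u" by auto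
      have "zmult (n*k - 1) u = 0"
        using zm_add[of "n*k" "-1" u] zm_mult[of n k u] k n(2) zm_neg[of 1 u] zm_mult[of "-1" 1 u]
        by (simp add: algebra_simps)
      then have "n*k - 1 = 0" using torsion_free[OF unp] u0 by blast
      then have "n*k = 1" by simp
      then have "\<bar>n\<bar> = 1" using zmult_eq_1_iff by auto
      with n(1) show False by simp
    qed
  next
    assume nodiv: "\<not> (\<exists>(x::'a) (n::int). \<bar>n\<bar> \<ge> 2 \<and> zmult n x = u)"
    show "rational_subgroup u = range (\<lambda>k::int. zmult k u)"
    proof
      show "rational_subgroup u \<subseteq> range (\<lambda>k::int. zmult k u)"
      proof
        fix g assume "g \<in> rational_subgroup u"
        then obtain p m :: int where pm: "p \<noteq> 0" "zmult p g = zmult m u"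
          by (auto simp: rational_subgroup_def)
        define d where "d = gcd p m"
        have d0: "d \<noteq> 0" using pm(1) by (simp add: d_def)
        obtain p' where p': "p = d * p'" unfolding d_def by (metis gcd_dvd1 dvdE)
        obtain m' where m': "m = d * m'" unfolding d_def by (metis gcd_dvd2 dvdE)
        obtain a b where ab: "a * p + b * m = d" unfolding d_def using bezout_int by metis
        have "zmult d (zmult p' g - zmult m' u) = 0"
          using pm(2) p' m' by (simp add: zm_diff zm_mult[symmetric])
        then have "zmult p' g - zmult m' u = 0" using torsion_free[OF unp d0] by blast
        then have e1: "zmult p' g = zmult m' u" by simp
        have "zmult d u = zmult a (zmult p u) + zmult b (zmult m u)"
          using ab[symmetric] by (simp add: zm_add zm_mult[symmetric] mult.assoc)
        also have "\<dots> = zmult a (zmult p u) + zmult b (zmult p g)" using pm(2) by simp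
        also have "\<dots> = zmult p (zmult a u + zmult b g)"
          by (simp add: zm_addr zm_mult[symmetric] mult.commute)
        also have "\<dots> = zmult d (zmult p' (zmult a u + zmult b g))"
          using p' by (simp add: zm_mult)
        finally have "zmult d (u - zmult p' (zmult a u + zmult b g)) = 0"
          by (simp add: zm_diff)
        then have "u - zmult p' (zmult a u + zmult b g) = 0" using torsion_free[OF unp d0] by blast
        then have "u = zmult p' (zmult a u + zmult b g)" by simp
        then have "\<bar>p'\<bar> < 2" using nodiv by (metis linorder_not_less)
        moreover have "p' \<noteq> 0" using pm(1) p' by simp
        ultimately have "p' = 1 \<or> p' = -1" by linarith
        then have "p' * p' = 1" by auto
        then have "g = zmult (p'*m') u"
          using e1 by (metis zm_1 zm_mult)
        then show "g \<in> range (\<lambda>k::int. zmult k u)" by blast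
      qed
    qed (rule sub)
  qed
qed

end
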